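(* Let $\mathcal{X}_1,\mathcal{X}_2$ be non-empty sets, $\mathcal{B}_i\subseteq\mathcal{P}(\mathcal{X}_i)\setminus\{\emptyset\}$ and $\mathcal{D}_i$ a coherent set of desirable gambles on $\mathcal{X}_i$ for $i\in\{1,2\}$. Then $\mathcal{D}_1\otimes\mathcal{D}_2$ is a coherent set of desirable gambles on $\mathcal{X}_1\times\mathcal{X}_2$.
   Context: Gambles on a non-empty set $\mathcal{X}$ are bounded real functions; $\mathcal{G}(\mathcal{X})$ is the set of gambles, $\mathcal{G}_{>0}(\mathcal{X})$ the non-negative non-zero gambles, $\mathbb{I}_A$ the indicator of $A$. For $\mathcal{A}\subseteq\mathcal{G}(\mathcal{X})$: $\mathrm{posi}(\mathcal{A}):=\{\sum_{i=1}^n\lambda_if_i\colon n\in\mathbb{N},\lambda_i>0,f_i\in\mathcal{A}\}$, $\mathcal{E}(\mathcal{A}):=\mathrm{posi}(\mathcal{A}\cup\mathcal{G}_{>0}(\mathcal{X}))$. A coherent set of desirable gambles $\mathcal{D}\subseteq\mathcal{G}(\mathcal{X})$ satisfies, for all $f,g\in\mathcal{G}(\mathcal{X})$ and $\lambda>0$: (D1) $f\geq0,f\neq0\Rightarrow f\in\mathcal{D}$; (D2) $f\in\mathcal{D}\Rightarrow\lambda f\in\mathcal{D}$; (D3) $f,g\in\mathcal{D}\Rightarrow f+g\in\mathcal{D}$; (D4) $f\leq0\Rightarrow f\notin\mathcal{D}$. Gambles on $\mathcal{X}_i$ are identified with their cylindrical extensions to $\mathcal{X}_1\times\mathcal{X}_2$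 (e.g. $f(X_1)(x_1,x_2)=f(x_1)$), events $B\subseteq\mathcal{X}_1$ with $B\times\mathcal{X}_2$ (similarly for $\mathcal{X}_2$). $\mathcal{D}_1\otimes\mathcal{D}_2:=\mathcal{E}(\mathcal{A}_{1\to2}\cup\mathcal{A}_{2\to1})$ (with $\mathcal{E}$ taken on $\mathcal{X}_1\times\mathcal{X}_2$), where $\mathcal{A}_{1\to2}:=\{f_2(X_2)\mathbb{I}_{B_1}(X_1)\colon f_2\in\mathcal{D}_2,B_1\in\mathcal{B}_1\cup\{\mathcal{X}_1\}\}$ and $\mathcal{A}_{2\to1}:=\{f_1(X_1)\mathbb{I}_{B_2}(X_2)\colon f_1\in\mathcal{D}_1,B_2\in\mathcal{B}_2\cup\{\mathcal{X}_2\}\}$. *)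

theory Defs
  imports "HOL-Analysis.Analysis"
begin

text \<open>Possibility spaces are modelled as (automatically non-empty) types.
  Gambles are bounded real-valued functions on the type.\<close>

definition gambles :: "('x \<Rightarrow> real) set" where
  "gambles = {f. bounded (range f)}"

definition pos_gambles :: "('x \<Rightarrow> real) set" where
  "pos_gambles = {f \<in> gambles. (\<forall>x. f x \<ge> 0) \<and> f \<noteq> (\<lambda>x. 0)}"

definition posi :: "('x \<Rightarrow> real) set \<Rightarrow> ('x \<Rightarrow> real) set" where
  "posi A = {g. \<exists>n::nat. \<exists>lam f. n \<ge> 1 \<and> (\<forall>i<n. lam i > (0::real) \<and> f i \<in> A)
                  \<and> g = (\<lambda>x. \<Sum>i<n. lam i * f i x)}"

definition natext :: "('x \<Rightarrow> real) set \<Rightarrow> ('x \<Rightarrow> real) set" where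
  "natext A = posi (A \<union> pos_gambles)"

definition coherent :: "('x \<Rightarrow> real) set \<Rightarrow> bool" where
  "coherent D \<longleftrightarrow> D \<subseteq> gambles
     \<and> (\<forall>f \<in> gambles. (\<forall>x. f x \<ge> 0) \<and> f \<noteq> (\<lambda>x. 0) \<longrightarrow> f \<in> D)
     \<and> (\<forall>f \<in> D. \<forall>lam::real. lam > 0 \<longrightarrow> (\<lambda>x. lam * f x) \<in> D)
     \<and> (\<forall>f \<in> D. \<forall>g \<in> D. (\<lambda>x. f x + g x) \<in> D)
     \<and> (\<forall>f \<in> gambles. (\<forall>x. f x \<le> 0) \<longrightarrow> f \<notin> D)"

definition A12 :: "('y \<Rightarrow> real) set \<Rightarrow> 'x set set \<Rightarrow> ('x \<times> 'y \<Rightarrow> real) set" where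
  "A12 D2 B1 = {(\<lambda>(x1, x2). f2 x2 * indicator B x1) | f2 B. f2 \<in> D2 \<and> B \<in> B1 \<union> {UNIV}}"

definition A21 :: "('x \<Rightarrow> real) set \<Rightarrow> 'y set set \<Rightarrow> ('x \<times> 'y \<Rightarrow> real) set" where
  "A21 D1 B2 = {(\<lambda>(x1, x2). f1 x1 * indicator B x2) | f1 B. f1 \<in> D1 \<and> B \<in> B2 \<union> {UNIV}}"

definition indep_product ::
  "('x \<Rightarrow> real) set \<Rightarrow> 'x set set \<Rightarrow> ('y \<Rightarrow> real) set \<Rightarrow> 'y set set \<Rightarrow> ('x \<times> 'y \<Rightarrow> real) set" where
  "indep_product D1 B1 D2 B2 = natext (A12 D2 B1 \<union> A21 D1 B2)"

end

theory Submission
  imports Defs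
begin
inductive_set kone :: "('i \<Rightarrow> real) set \<Rightarrow> ('i \<Rightarrow> real) set" for W where
  kone_zero: "(\<lambda>i. 0) \<in> kone W"
| kone_add: "u \<in> kone W \<Longrightarrow> w \<in> W \<Longrightarrow> c \<ge> 0 \<Longrightarrow> (\<lambda>i. u i + c * w i) \<in> kone W"

lemma kone_base: "w \<in> W \<Longrightarrow> w \<in> kone W"
  using kone_add[OF kone_zero, of w W 1] by simp

lemma kone_plus: "v \<in> kone W \<Longrightarrow> u \<in> kone W \<Longrightarrow> (\<lambda>i. u i + v i) \<in> kone W"
proof (induction v rule: kone.induct)
  case kone_zero then show ?case by simp
next
  case (kone_add v w c)
  have "(\<lambda>i. (u i + v i) + c * w i) \<in> kone W" using kone_add by (intro kone.kone_add) auto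
  then show ?case by (simp add: add.assoc)
qed

lemma kone_scale: "u \<in> kone W \<Longrightarrow> c \<ge> 0 \<Longrightarrow> (\<lambda>i. c * u i) \<in> kone W"
proof (induction u rule: kone.induct)
  case kone_zero then show ?case by (simp add: kone.kone_zero)
next
  case (kone_add u w d)
  have "(\<lambda>i. c * u i + (c*d) * w i) \<in> kone W" using kone_add by (intro kone.kone_add) auto
  then show ?case by (simp add: algebra_simps)
qed

lemma kone_trans: "u \<in> kone W' \<Longrightarrow> W' \<subseteq> kone W \<Longrightarrow> u \<in> kone W"
proof (induction u rule: kone.induct)
  case kone_zero then show ?case by (simp add: kone.kone_zero)
next
  case (kone_add u w c)
  then show ?case using kone_plus[OF kone_scale[of w W c]] by auto
qed

lemma kone_lin: "u \<in> kone W \<Longrightarrow> (\<forall>w\<in>W. (\<Sum>i\<in>S. l i * w i) \<le> (0::real)) \<Longrightarrow> (\<Sum>i\<in>S. l i * u i) \<le> 0"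
proof (induction u rule: kone.induct)
  case kone_zero then show ?case by simp
next
  case (kone_add u w c)
  have e: "(\<Sum>i\<in>S. l i * (u i + c * w i)) = (\<Sum>i\<in>S. l i * u i) + c * (\<Sum>i\<in>S. l i * w i)"
    by (simp add: algebra_simps sum.distrib sum_distrib_left)
  have "c * (\<Sum>i\<in>S. l i * w i) \<le> 0" using kone_add by (simp add: mult_nonneg_nonpos)
  then show ?case using kone_add e by simp
qed

lemma kone_coord: "u \<in> kone W \<Longrightarrow> (\<forall>w\<in>W. w k \<ge> (0::real)) \<Longrightarrow> u k \<ge> 0"
  by (induction u rule: kone.induct) auto

lemma small_eps:
  fixes u p :: "'i \<Rightarrow> real"
  assumes "finite S" "\<forall>i\<in>S. u i > 0"
  shows "\<exists>e>0. \<forall>e'. 0 < e' \<longrightarrow> e' \<le> e \<longrightarrow> (\<forall>i\<in>S. u i + e' * p i > 0)"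
  using assms
proof (induction S rule: finite_induct)
  case empty then show ?case by (intro exI[of _ 1]) auto
next
  case (insert j S)
  then obtain e1 where e1: "e1 > 0" "\<forall>e'. 0 < e' \<longrightarrow> e' \<le> e1 \<longrightarrow> (\<forall>i\<in>S. u i + e' * p i > 0)" by auto
  define e2 where "e2 = (if p j \<ge> 0 then 1 else u j / (- p j) / 2)"
  have uj: "u j > 0" using insert by auto
  have e2: "e2 > 0" using uj by (auto simp: e2_def intro!: divide_pos_neg)
  have j: "u j + e' * p j > 0" if "0 < e'" "e' \<le> e2" for e'
  proof (cases "p j \<ge> 0")
    case True then show ?thesis using uj that by (simp add: add_pos_nonneg)
  next
    case False
    then have "e' * (- p j) \<le> e2 * (- p j)" using that by (intro mult_right_mono) auto
    also have "\<dots> = u j / 2" using False by (simp add: e2_def)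
    finally show ?thesis using uj by simp
  qed
  show ?case using e1 e2 j by (intro exI[of _ "min e1 e2"]) auto
qed

definition villehyp :: "'i set \<Rightarrow> ('i \<Rightarrow> real) set \<Rightarrow> bool" where
  "villehyp S W \<longleftrightarrow> (\<forall>l. (\<forall>i\<in>S. l i \<ge> 0) \<and> (\<exists>i\<in>S. l i > 0) \<longrightarrow> (\<exists>w\<in>W. (\<Sum>i\<in>S. l i * w i) > 0))"

lemma ville:
  fixes S :: "'i set"
  assumes "finite S" "villehyp S W"
  shows "\<exists>u\<in>kone W. \<forall>i\<in>S. u i > 0"
  using assms
proof (induction S arbitrary: W rule: finite_induct)
  case empty then show ?case using kone_zero by auto
next
  case (insert k S W)
  define W' where "W' = {u \<in> kone W. u k \<ge> 0}"
  obtain p where p: "p \<in> W" "p k > 0"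
  proof -
    have "\<exists>w\<in>W. (\<Sum>i\<in>insert k S. (if i = k then 1 else 0) * w i) > 0"
      using insert(4) unfolding villehyp_def by (elim allE[of _ "\<lambda>i. if i = k then 1 else 0"]) auto
    moreover have "(\<Sum>i\<in>insert k S. (if i = k then 1 else 0) * w i) = w k" for w :: "'i \<Rightarrow> real"
    proof -
      have "(\<Sum>i\<in>S. (if i = k then 1 else 0) * w i) = 0" using insert(2) by (intro sum.neutral) auto
      then show ?thesis using insert(1,2) by simp
    qed
    ultimately show ?thesis using that by auto
  qed
  show ?case
  proof (cases "villehyp S W'")
    case True
    then obtain u where u: "u \<in> kone W'" "\<forall>i\<in>S. u i > 0" using insert(3) by blast
    have uW: "u \<in> kone W" using kone_trans[OF u(1)] unfolding W'_def by auto
    have uk: "u k \<ge> 0" using kone_coord[OF u(1)] unfolding W'_def by auto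
    obtain e where e: "e > 0" "\<forall>i\<in>S. u i + e * p i > 0" using small_eps[OF insert(1) u(2), of p] by auto
    have "(\<lambda>i. u i + e * p i) \<in> kone W" using uW p e by (intro kone_add) auto
    moreover have "u k + e * p k > 0" using uk e p by (simp add: add_nonneg_pos)
    ultimately show ?thesis using e by (intro bexI[of _ "\<lambda>i. u i + e * p i"]) auto
  next
    case False
    then obtain mu where mu: "\<forall>i\<in>S. mu i \<ge> 0" "\<exists>i\<in>S. mu i > 0"
      and muW: "\<forall>w\<in>W'. (\<Sum>i\<in>S. mu i * w i) \<le> 0"
      unfolding villehyp_def by (metis not_le)
    define g where "g w = (\<Sum>i\<in>S. mu i * w i)" for w :: "'i \<Rightarrow> real"
    have glin: "g (\<lambda>i. a * x i + b * y i) = a * g x + b * g y" for a b x y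
      by (simp add: g_def algebra_simps sum.distrib sum_distrib_left)
    define T where "T = (\<lambda>w. g w / w k) ` {w\<in>W. w k > 0}"
    have Tle: "t \<le> 0" if tT: "t \<in> T" for t
    proof -
      obtain w where w: "w \<in> W" "w k > 0" "t = g w / w k" using tT T_def by auto
      have "(\<lambda>i. 0 + (1 / w k) * w i) \<in> kone W" using w by (intro kone_add kone_zero) auto
      then have "(\<lambda>i. (1 / w k) * w i + 0 * w i) \<in> W'" using w unfolding W'_def by auto
      then have "g (\<lambda>i. (1 / w k) * w i + 0 * w i) \<le> 0" using muW g_def by auto
      then have "(1 / w k) * g w + 0 * g w \<le> 0" unfolding glin .
      then show ?thesis using w by simp
    qed
    have Tne: "T \<noteq> {}" using p T_def by auto
    have Tbdd: "bdd_above T" using Tle by (intro bdd_aboveI) auto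
    define s where "s = Sup T"
    have s0: "s \<le> 0" unfolding s_def using Tne Tle by (intro cSup_least) auto
    define l where "l = mu(k := - s)"
    have main: "(\<Sum>i\<in>insert k S. l i * w i) \<le> 0" if w: "w \<in> W" for w
    proof -
      have eq: "(\<Sum>i\<in>insert k S. l i * w i) = - s * w k + g w"
      proof -
        have "(\<Sum>i\<in>S. l i * w i) = g w" unfolding g_def l_def using insert(2)
          by (intro sum.cong) auto
        then show ?thesis using insert(1,2) by (simp add: l_def)
      qed
      consider "w k > 0" | "w k = 0" | "w k < 0" by linarith
      then show ?thesis
      proof cases
        case 1
        then have "g w / w k \<le> s" unfolding s_def using Tbdd w T_def by (intro cSup_upper) auto
        then have "g w \<le> s * w k" using 1 by (simp add: divide_le_eq)
        then show ?thesis using eq by simp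
      next
        case 2
        have "(\<lambda>i. 1 * w i + 0 * w i) \<in> W'" using w 2 kone_base[OF w] unfolding W'_def by simp
        then have "g (\<lambda>i. 1 * w i + 0 * w i) \<le> 0" using muW g_def by auto
        then have "1 * g w + 0 * g w \<le> 0" unfolding glin .
        then show ?thesis using eq 2 by simp
      next
        case 3
        have "s \<le> g w / w k" unfolding s_def
        proof (rule cSup_least[OF Tne])
          fix t assume tT: "t \<in> T"
          obtain q where q: "q \<in> W" "q k > 0" "t = g q / q k" using tT T_def by auto
          have "(\<lambda>i. (0 + (1 / q k) * q i) + (1 / (- w k)) * w i) \<in> kone W"
            using q w 3 by (intro kone_add kone_zero) auto
          moreover have "(0 + (1 / q k) * q k) + (1 / (- w k)) * w k = 0" using q 3 by simp
          ultimately have "(\<lambda>i. (1 / q k) * q i + (1 / (- w k)) * w i) \<in> W'" unfolding W'_def by simp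
          then have "g (\<lambda>i. (1 / q k) * q i + (1 / (- w k)) * w i) \<le> 0" using muW g_def by auto
          then have "(1 / q k) * g q + (1 / (- w k)) * g w \<le> 0" unfolding glin .
          then have "g q / q k + g w / (- w k) \<le> 0" by simp
          then show "t \<le> g w / w k" using q by simp
        qed
        then have "g w \<le> s * w k" using 3 by (simp add: le_divide_eq)
        then show ?thesis using eq by simp
      qed
    qed
    have "\<forall>i\<in>insert k S. l i \<ge> 0" using mu s0 insert(2) by (auto simp: l_def)
    moreover have "\<exists>i\<in>insert k S. l i > 0" using mu insert(2) by (auto simp: l_def)
    ultimately obtain w where "w \<in> W" "(\<Sum>i\<in>insert k S. l i * w i) > 0"
      using insert(4) unfolding villehyp_def by blast
    then show ?thesis using main by fastforce
  qed
qed


lemma sum_split_add: fixes n1 n2 :: nat shows "(\<Sum>i<n1+n2. h i) = (\<Sum>i<n1. h i) + (\<Sum>i<n2. h (n1 + i))"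
  by (induction n2) (simp_all add: add.assoc)

lemma gambles_iff: "f \<in> gambles \<longleftrightarrow> (\<exists>M. \<forall>x. \<bar>f x\<bar> \<le> M)"
  unfolding gambles_def by (auto simp: bounded_iff)

lemma gamble_sum:
  assumes "finite S" "\<forall>i\<in>S. f i \<in> gambles"
  shows "(\<lambda>x. \<Sum>i\<in>S. c i * f i x) \<in> gambles"
proof -
  have "\<forall>i\<in>S. \<exists>M. \<forall>x. \<bar>f i x\<bar> \<le> M" using assms gambles_iff by blast
  then obtain M where M: "\<forall>i\<in>S. \<forall>x. \<bar>f i x\<bar> \<le> M i" by (rule bchoice[elim_format]) blast
  have "\<bar>\<Sum>i\<in>S. c i * f i x\<bar> \<le> (\<Sum>i\<in>S. \<bar>c i\<bar> * M i)" for x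
  proof -
    have "\<bar>\<Sum>i\<in>S. c i * f i x\<bar> \<le> (\<Sum>i\<in>S. \<bar>c i * f i x\<bar>)" by (rule sum_abs)
    also have "\<dots> \<le> (\<Sum>i\<in>S. \<bar>c i\<bar> * M i)"
      using M by (intro sum_mono) (auto simp: abs_mult intro: mult_left_mono)
    finally show ?thesis .
  qed
  then show ?thesis unfolding gambles_iff by blast
qed

lemma posi_gambles: "A \<subseteq> gambles \<Longrightarrow> posi A \<subseteq> gambles"
proof
  fix g assume A: "A \<subseteq> gambles" and "g \<in> posi A"
  then have "\<exists>n::nat. \<exists>lam f. n \<ge> 1 \<and> (\<forall>i<n. lam i > (0::real) \<and> f i \<in> A) \<and> g = (\<lambda>x. \<Sum>i<n. lam i * f i x)"
    unfolding posi_def by simp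
  then obtain n :: nat and lam f where "\<forall>i<n. lam i > (0::real) \<and> f i \<in> A" "g = (\<lambda>x. \<Sum>i<n. lam i * f i x)"
    by blast
  then show "g \<in> gambles" using A gamble_sum[of "{..<n}" f lam] by blast
qed

lemma coh_sum:
  assumes coh: "coherent D" and "finite S" "\<forall>k\<in>S. c k \<ge> 0 \<and> a k \<in> D" "\<exists>k\<in>S. c k > 0"
  shows "(\<lambda>x. \<Sum>k\<in>S. c k * a k x) \<in> D"
  using assms(2-4)
proof (induction S rule: finite_induct)
  case empty then show ?case by simp
next
  case (insert j S)
  have sc: "\<forall>f\<in>D. \<forall>lam::real. lam > 0 \<longrightarrow> (\<lambda>x. lam * f x) \<in> D"
    and ad: "\<forall>f \<in> D. \<forall>g \<in> D. (\<lambda>x. f x + g x) \<in> D" using coh unfolding coherent_def by auto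
  have eq: "(\<lambda>x. \<Sum>k\<in>insert j S. c k * a k x) = (\<lambda>x. c j * a j x + (\<Sum>k\<in>S. c k * a k x))"
    using insert(1,2) by simp
  show ?case
  proof (cases "\<exists>k\<in>S. c k > 0")
    case True
    then have IH: "(\<lambda>x. \<Sum>k\<in>S. c k * a k x) \<in> D" using insert by auto
    show ?thesis
    proof (cases "c j > 0")
      case True
      then have "(\<lambda>x. c j * a j x) \<in> D" using sc insert by auto
      then show ?thesis unfolding eq using ad IH by auto
    next
      case False
      then have "c j = 0" using insert by force
      then show ?thesis unfolding eq using IH by simp
    qed
  next
    case False
    then have z: "(\<Sum>k\<in>S. c k * a k x) = 0" for x using insert by (intro sum.neutral) force
    have "c j > 0" using False insert by auto
    then have "(\<lambda>x. c j * a j x) \<in> D" using sc insert by auto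
    then show ?thesis unfolding eq z by simp
  qed
qed

lemma coh_pos: "coherent D \<Longrightarrow> f \<in> D \<Longrightarrow> \<exists>x. f x > 0"
proof (rule ccontr)
  assume c: "coherent D" "f \<in> D" "\<not> (\<exists>x. f x > 0)"
  then have "f \<in> gambles" "\<forall>x. f x \<le> 0" unfolding coherent_def by (auto simp: not_less)
  then show False using c unfolding coherent_def by blast
qed


lemma posi_scale:
  assumes "g \<in> posi A" "c > 0" shows "(\<lambda>x. c * g x) \<in> posi A"
proof -
  obtain n :: nat and lam f where H: "n \<ge> 1" "\<forall>i<n. lam i > (0::real) \<and> f i \<in> A" "g = (\<lambda>x. \<Sum>i<n. lam i * f i x)"
    using assms(1) unfolding posi_def by blast
  have "(\<lambda>x. c * g x) = (\<lambda>x. \<Sum>i<n. (c * lam i) * f i x)"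
    using H(3) by (simp add: sum_distrib_left algebra_simps)
  moreover have "\<forall>i<n. c * lam i > 0 \<and> f i \<in> A" using H assms(2) by auto
  ultimately show ?thesis unfolding posi_def mem_Collect_eq using H(1)
    by (intro exI[of _ n] exI[of _ "\<lambda>i. c * lam i"] exI[of _ f]) simp
qed

lemma posi_add:
  assumes "g \<in> posi A" "h \<in> posi A" shows "(\<lambda>x. g x + h x) \<in> posi A"
proof -
  obtain n1 :: nat and lam1 f1 where H1: "n1 \<ge> 1" "\<forall>i<n1. lam1 i > (0::real) \<and> f1 i \<in> A" "g = (\<lambda>x. \<Sum>i<n1. lam1 i * f1 i x)"
    using assms(1) unfolding posi_def by blast
  obtain n2 :: nat and lam2 f2 where H2: "n2 \<ge> 1" "\<forall>i<n2. lam2 i > (0::real) \<and> f2 i \<in> A" "h = (\<lambda>x. \<Sum>i<n2. lam2 i * f2 i x)"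
    using assms(2) unfolding posi_def by blast
  define lam where "lam i = (if i < n1 then lam1 i else lam2 (i - n1))" for i
  define f where "f i = (if i < n1 then f1 i else f2 (i - n1))" for i
  have "(\<lambda>x. g x + h x) = (\<lambda>x. \<Sum>i<n1+n2. lam i * f i x)"
    unfolding sum_split_add H1(3) H2(3) lam_def f_def by simp
  moreover have "\<forall>i<n1+n2. lam i > 0 \<and> f i \<in> A" using H1(2) H2(2) unfolding lam_def f_def by auto
  moreover have "n1 + n2 \<ge> 1" using H1 by simp
  ultimately show ?thesis unfolding posi_def mem_Collect_eq
    by (intro exI[of _ "n1+n2"] exI[of _ lam] exI[of _ f]) simp
qed

lemma A12_gambles: "D2 \<subseteq> gambles \<Longrightarrow> A12 D2 B1 \<subseteq> gambles"
proof
  fix g assume D: "D2 \<subseteq> gambles" and "g \<in> A12 D2 B1"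
  then obtain f2 B where g: "g = (\<lambda>(x1, x2). f2 x2 * indicator B x1)" "f2 \<in> D2" unfolding A12_def by blast
  then obtain M where M: "\<forall>x. \<bar>f2 x\<bar> \<le> M" using D gambles_iff by blast
  have "\<bar>g x\<bar> \<le> M" for x using M[rule_format, of "snd x"] M[rule_format, of "snd x"]
    by (cases x) (auto simp: g indicator_def)
  then show "g \<in> gambles" unfolding gambles_iff by blast
qed

lemma A21_gambles: "D1 \<subseteq> gambles \<Longrightarrow> A21 D1 B2 \<subseteq> gambles"
proof
  fix g assume D: "D1 \<subseteq> gambles" and "g \<in> A21 D1 B2"
  then obtain f1 B where g: "g = (\<lambda>(x1, x2). f1 x1 * indicator B x2)" "f1 \<in> D1" unfolding A21_def by blast
  then obtain M where M: "\<forall>x. \<bar>f1 x\<bar> \<le> M" using D gambles_iff by blast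
  have "\<bar>g x\<bar> \<le> M" for x using M[rule_format, of "fst x"]
    by (cases x) (auto simp: g indicator_def)
  then show "g \<in> gambles" unfolding gambles_iff by blast
qed


lemma D4part:
  fixes D1 :: "('x \<Rightarrow> real) set" and D2 :: "('y \<Rightarrow> real) set"
    and B1 :: "'x set set" and B2 :: "'y set set"
  assumes nB1: "{} \<notin> B1" and nB2: "{} \<notin> B2"
    and c1: "coherent D1" and c2: "coherent D2"
    and gin: "g \<in> indep_product D1 B1 D2 B2" and gle: "\<forall>z. g z \<le> 0"
  shows False
proof -
  obtain n :: nat and lam f where H: "n \<ge> 1"
    "\<forall>i<n. lam i > (0::real) \<and> f i \<in> A12 D2 B1 \<union> A21 D1 B2 \<union> pos_gambles"
    "g = (\<lambda>z. \<Sum>i<n. lam i * f i z)"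
    using gin unfolding indep_product_def natext_def posi_def by blast
  define K1 where "K1 = {k. k < n \<and> f k \<in> A12 D2 B1}"
  define K2 where "K2 = {k. k < n \<and> f k \<notin> A12 D2 B1 \<and> f k \<in> A21 D1 B2}"
  define K3 where "K3 = {k. k < n \<and> f k \<notin> A12 D2 B1 \<and> f k \<notin> A21 D1 B2}"
  have fin: "finite K1" "finite K2" "finite K3" unfolding K1_def K2_def K3_def by auto
  have "\<forall>k\<in>K1. \<exists>a B. a \<in> D2 \<and> B \<in> B1 \<union> {UNIV} \<and> f k = (\<lambda>(x1, x2). a x2 * indicator B x1)"
    unfolding K1_def A12_def by blast
  then obtain a BB where aB: "\<forall>k\<in>K1. a k \<in> D2 \<and> BB k \<in> B1 \<union> {UNIV} \<and> f k = (\<lambda>(x1, x2). a k x2 * indicator (BB k) x1)"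
    by metis
  have "\<forall>k\<in>K2. \<exists>b C. b \<in> D1 \<and> C \<in> B2 \<union> {UNIV} \<and> f k = (\<lambda>(x1, x2). b x1 * indicator C x2)"
    unfolding K2_def A21_def by blast
  then obtain b CC where bC: "\<forall>k\<in>K2. b k \<in> D1 \<and> CC k \<in> B2 \<union> {UNIV} \<and> f k = (\<lambda>(x1, x2). b k x1 * indicator (CC k) x2)"
    by metis
  have BBne: "BB k \<noteq> {}" if "k \<in> K1" for k using aB that nB1 by auto
  have CCne: "CC k \<noteq> {}" if "k \<in> K2" for k using bC that nB2 by auto
  have f3: "\<forall>z. f k z \<ge> 0" "f k \<noteq> (\<lambda>z. 0)" if "k \<in> K3" for k
    using that H(2) unfolding K3_def pos_gambles_def by auto
  have U: "{..<n} = K1 \<union> K2 \<union> K3" unfolding K1_def K2_def K3_def by auto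
  have dis: "K1 \<inter> K2 = {}" "(K1 \<union> K2) \<inter> K3 = {}" unfolding K1_def K2_def K3_def by auto
  define F where "F x1 x2 = (\<Sum>k\<in>K1. lam k * f k (x1, x2)) + (\<Sum>k\<in>K2. lam k * f k (x1, x2))" for x1 x2
  have gsplit: "g z = (\<Sum>k\<in>K1. lam k * f k z) + (\<Sum>k\<in>K2. lam k * f k z) + (\<Sum>k\<in>K3. lam k * f k z)" for z
    unfolding H(3) U using fin dis by (simp add: sum.union_disjoint)
  have K3t: "lam k * f k z \<ge> 0" if "k \<in> K3" for k z
  proof -
    have "lam k > 0" using that H(2) unfolding K3_def by auto
    moreover have "f k z \<ge> 0" using f3(1)[OF that] by blast
    ultimately show ?thesis by simp
  qed
  have K3nn: "(\<Sum>k\<in>K3. lam k * f k z) \<ge> 0" for z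
    using K3t by (intro sum_nonneg) auto
  have Fle: "F x1 x2 \<le> 0" for x1 x2
    using gsplit[of "(x1, x2)"] gle[rule_format, of "(x1, x2)"] K3nn[of "(x1, x2)"] unfolding F_def by linarith
  have F1: "(\<Sum>k\<in>K1. lam k * f k (x1, x2)) = (\<Sum>k\<in>K1. lam k * (a k x2 * indicator (BB k) x1))" for x1 x2
    using aB by (intro sum.cong) auto
  have F2: "(\<Sum>k\<in>K2. lam k * f k (x1, x2)) = (\<Sum>k\<in>K2. lam k * (b k x1 * indicator (CC k) x2))" for x1 x2
    using bC by (intro sum.cong) auto
  have lampos: "\<forall>k\<in>K1 \<union> K2 \<union> K3. lam k > 0" using H(2) U by auto
  show False
  proof (cases "K1 = {}")
    case False
    define v where "v x2 = (\<lambda>k. if k \<in> K1 then lam k * a k x2 else if k \<in> K2 then lam k * indicator (CC k) x2 else 0)" for x2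
    have vh: "villehyp K1 (range v)" unfolding villehyp_def
    proof (intro allI impI)
      fix l :: "nat \<Rightarrow> real" assume l: "(\<forall>i\<in>K1. 0 \<le> l i) \<and> (\<exists>i\<in>K1. 0 < l i)"
      have p1: "\<forall>k\<in>K1. l k * lam k \<ge> 0 \<and> a k \<in> D2"
      proof
        fix k assume k: "k \<in> K1"
        then have "lam k > 0" "l k \<ge> 0" using lampos l by auto
        then show "l k * lam k \<ge> 0 \<and> a k \<in> D2" using aB k by simp
      qed
      have p2: "\<exists>k\<in>K1. l k * lam k > 0"
      proof -
        obtain k where k: "k \<in> K1" "l k > 0" using l by blast
        then have "lam k > 0" using lampos by auto
        then show ?thesis using k by (intro bexI[of _ k]) auto
      qed
      have "(\<lambda>x. \<Sum>k\<in>K1. (l k * lam k) * a k x) \<in> D2"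
        using p1 p2 fin by (intro coh_sum[OF c2]) auto
      then obtain x2 where x2: "(\<Sum>k\<in>K1. (l k * lam k) * a k x2) > 0" using coh_pos[OF c2] by blast
      have "(\<Sum>k\<in>K1. l k * v x2 k) = (\<Sum>k\<in>K1. (l k * lam k) * a k x2)"
        unfolding v_def by (intro sum.cong) auto
      then show "\<exists>w\<in>range v. (\<Sum>i\<in>K1. l i * w i) > 0" using x2 by (intro bexI[of _ "v x2"]) auto
    qed
    obtain u where u: "u \<in> kone (range v)" "\<forall>k\<in>K1. u k > 0" using ville[OF fin(1) vh] by blast
    have u2: "u k \<ge> 0" if k2: "k \<in> K2" for k
    proof -
      have nk: "k \<notin> K1" using dis(1) k2 by auto
      have lk: "lam k > 0" using lampos k2 by auto
      have "\<forall>w\<in>range v. w k \<ge> 0" unfolding v_def using nk k2 lk by (auto simp: indicator_def)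
      then show ?thesis by (rule kone_coord[OF u(1)])
    qed
    have ineq: "(\<Sum>k\<in>K1. indicator (BB k) x1 * u k) + (\<Sum>k\<in>K2. u k * b k x1) \<le> 0" for x1
    proof -
      define l where "l k = (if k \<in> K1 then indicator (BB k) x1 else if k \<in> K2 then b k x1 else 0)" for k
      have lin: "(\<Sum>k\<in>K1 \<union> K2. l k * w k) = (\<Sum>k\<in>K1. l k * w k) + (\<Sum>k\<in>K2. l k * w k)" for w
        using fin dis by (simp add: sum.union_disjoint)
      have "\<forall>w\<in>range v. (\<Sum>k\<in>K1 \<union> K2. l k * w k) \<le> 0"
      proof
        fix w assume "w \<in> range v"
        then obtain x2 where w: "w = v x2" by auto
        have e1: "(\<Sum>k\<in>K1. l k * w k) = (\<Sum>k\<in>K1. lam k * (a k x2 * indicator (BB k) x1))"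
          unfolding w v_def l_def by (intro sum.cong) auto
        have e2: "(\<Sum>k\<in>K2. l k * w k) = (\<Sum>k\<in>K2. lam k * (b k x1 * indicator (CC k) x2))"
          unfolding w v_def l_def using dis by (intro sum.cong) auto
        show "(\<Sum>k\<in>K1 \<union> K2. l k * w k) \<le> 0"
          using Fle[of x1 x2] unfolding lin e1 e2 F_def F1 F2 .
      qed
      then have "(\<Sum>k\<in>K1 \<union> K2. l k * u k) \<le> 0" by (rule kone_lin[OF u(1)])
      moreover have "(\<Sum>k\<in>K1. l k * u k) = (\<Sum>k\<in>K1. indicator (BB k) x1 * u k)"
        unfolding l_def by (intro sum.cong) auto
      moreover have "(\<Sum>k\<in>K2. l k * u k) = (\<Sum>k\<in>K2. u k * b k x1)"
        unfolding l_def using dis by (intro sum.cong) auto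
      ultimately show ?thesis unfolding lin by simp
    qed
    have s1nn: "(\<Sum>k\<in>K1. indicator (BB k) x1 * u k) \<ge> 0" for x1
      using u(2) by (intro sum_nonneg) (auto simp: indicator_def less_imp_le)
    show False
    proof (cases "\<exists>k\<in>K2. u k > 0")
      case True
      have "(\<lambda>x. \<Sum>k\<in>K2. u k * b k x) \<in> D1"
        using True bC u2 fin by (intro coh_sum[OF c1]) auto
      then obtain x1 where "(\<Sum>k\<in>K2. u k * b k x1) > 0" using coh_pos[OF c1] by blast
      then show False using ineq[of x1] s1nn[of x1] by linarith
    next
      case nK: False
      then have "u k = 0" if "k \<in> K2" for k using u2 that by force
      then have z: "(\<Sum>k\<in>K2. u k * b k x1) = 0" for x1 by simp
      obtain k0 where k0: "k0 \<in> K1" using False by auto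
      obtain x1 where x1: "x1 \<in> BB k0" using BBne[OF k0] by auto
      have "indicator (BB k0) x1 * u k0 \<le> (\<Sum>k\<in>K1. indicator (BB k) x1 * u k)"
        using k0 fin u(2) by (intro member_le_sum) (auto simp: indicator_def less_imp_le)
      moreover have "u k0 > 0" using u(2) k0 by blast
      ultimately show False using ineq[of x1] z[of x1] x1 by simp
    qed
  next
    case True
    note K1e = True
    show False
    proof (cases "K2 = {}")
      case False
      obtain k0 where k0: "k0 \<in> K2" using False by auto
      obtain x2 where x2: "x2 \<in> CC k0" using CCne[OF k0] by auto
      have "(\<lambda>x. \<Sum>k\<in>K2. (lam k * indicator (CC k) x2) * b k x) \<in> D1"
        using bC lampos fin k0 x2 by (intro coh_sum[OF c1]) (auto intro!: bexI[of _ k0] simp: indicator_def less_imp_le)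
      then obtain x1 where x1: "(\<Sum>k\<in>K2. (lam k * indicator (CC k) x2) * b k x1) > 0"
        using coh_pos[OF c1] by blast
      have "F x1 x2 = (\<Sum>k\<in>K2. (lam k * indicator (CC k) x2) * b k x1)"
        unfolding F_def F2 K1e by (simp add: algebra_simps)
      then show False using Fle[of x1 x2] x1 by simp
    next
      case True
      then have K3: "K3 = {..<n}" using U K1e by simp
      have "0 \<in> K3" using K3 H(1) by auto
      then obtain z where z: "f 0 z \<noteq> 0" using f3(2)[of 0] by (auto simp: fun_eq_iff)
      moreover have "f 0 z \<ge> 0" using f3(1)[OF \<open>0 \<in> K3\<close>] by blast
      ultimately have fz: "f 0 z > 0" by (simp add: less_le)
      have "lam 0 * f 0 z \<le> (\<Sum>k\<in>K3. lam k * f k z)"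
        using \<open>0 \<in> K3\<close> fin K3t by (intro member_le_sum) auto
      moreover have "lam 0 * f 0 z > 0" using fz lampos \<open>0 \<in> K3\<close> by simp
      moreover have "g z \<le> 0" using gle by blast
      ultimately show False using gsplit[of z] True K1e by simp
    qed
  qed
qed


theorem proposition39:
  fixes D1 :: "('x \<Rightarrow> real) set" and D2 :: "('y \<Rightarrow> real) set"
    and B1 :: "'x set set" and B2 :: "'y set set"
  assumes "{} \<notin> B1" and "{} \<notin> B2"
    and "coherent D1" and "coherent D2"
  shows "coherent (indep_product D1 B1 D2 B2)"
proof -
  let ?A = "A12 D2 B1 \<union> A21 D1 B2 \<union> pos_gambles"
  have g1: "D1 \<subseteq> gambles" "D2 \<subseteq> gambles" using assms(3,4) unfolding coherent_def by auto
  have Ag: "?A \<subseteq> gambles" using A12_gambles[OF g1(2)] A21_gambles[OF g1(1)]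
    unfolding pos_gambles_def by auto
  have P: "indep_product D1 B1 D2 B2 = posi ?A" unfolding indep_product_def natext_def ..
  have s1: "indep_product D1 B1 D2 B2 \<subseteq> gambles" unfolding P using posi_gambles[OF Ag] .
  have s2: "f \<in> posi ?A" if "f \<in> gambles" "\<forall>x. f x \<ge> 0" "f \<noteq> (\<lambda>x. 0)" for f
  proof -
    have "f \<in> ?A" using that unfolding pos_gambles_def by auto
    moreover have "f = (\<lambda>x. \<Sum>i<(1::nat). (\<lambda>_. 1::real) i * (\<lambda>_. f) i x)" by simp
    ultimately show ?thesis unfolding posi_def mem_Collect_eq
      by (intro exI[of _ "1::nat"] exI[of _ "\<lambda>_. 1::real"] exI[of _ "\<lambda>_. f"]) simp
  qed
  show ?thesis unfolding coherent_def
  proof (intro conjI ballI allI impI)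
    show "indep_product D1 B1 D2 B2 \<subseteq> gambles" by (rule s1)
  next
    fix f :: "'x \<times> 'y \<Rightarrow> real" assume "f \<in> gambles" "(\<forall>x. f x \<ge> 0) \<and> f \<noteq> (\<lambda>x. 0)"
    then show "f \<in> indep_product D1 B1 D2 B2" unfolding P using s2 by blast
  next
    fix f :: "'x \<times> 'y \<Rightarrow> real" and lam :: real assume "f \<in> indep_product D1 B1 D2 B2" "lam > 0"
    then show "(\<lambda>x. lam * f x) \<in> indep_product D1 B1 D2 B2" unfolding P by (rule posi_scale)
  next
    fix f g :: "'x \<times> 'y \<Rightarrow> real" assume "f \<in> indep_product D1 B1 D2 B2" "g \<in> indep_product D1 B1 D2 B2"
    then show "(\<lambda>x. f x + g x) \<in> indep_product D1 B1 D2 B2" unfolding P by (rule posi_add)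
  next
    fix f :: "'x \<times> 'y \<Rightarrow> real" assume "f \<in> gambles" "\<forall>x. f x \<le> 0"
    then show "f \<notin> indep_product D1 B1 D2 B2" using D4part[OF assms] by blast
  qed
qed

end
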